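(* Let $d\ge1$, $L\ge1$. For every sequence $(x_t)\subseteq[-1,1]^d$, every $f^\star\in\mathcal{H}_L$ with $y_t=f^\star(x_t)$, and every horizon $T\ge2$, the envelope strategy satisfies $\sum_{t=1}^T|y_t-\hat y_t|^d\le 8^dL^d(1+\log T)$.
   Context: $\mathcal{H}_L$ is the set of functions $h:[-1,1]^d\to[0,1]$ with $|h(x)-h(x')|\le L\|x-x'\|_\infty$. Envelope strategy: at round $t$, with past data $(x_s,y_s)_{s<t}$, define $\underline h_t(x)=\max\{0,\max_{s<t}(y_s-L\|x-x_s\|_\infty)\}$ and $\overline h_t(x)=\min\{1,\min_{s<t}(y_s+L\|x-x_s\|_\infty)\}$ (with $\max_{\emptyset}=-\infty$, $\min_\emptyset=+\infty$), and predict $\hat y_t=\frac12(\underline h_t(x_t)+\overline h_t(x_t))$. $\log$ is the natural logarithm. *)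

theory Defs
  imports "HOL-Analysis.Analysis"
begin

definition linf_dist :: "real ^ 'd \<Rightarrow> real ^ 'd \<Rightarrow> real" where
  "linf_dist x x' = Max ((\<lambda>i. \<bar>x $ i - x' $ i\<bar>) ` UNIV)"

definition cube :: "(real ^ 'd) set" where
  "cube = {x. \<forall>i. -1 \<le> x $ i \<and> x $ i \<le> 1}"

definition lip_class :: "real \<Rightarrow> (real ^ 'd \<Rightarrow> real) set" where
  "lip_class L = {h. (\<forall>x\<in>cube. 0 \<le> h x \<and> h x \<le> 1) \<and>
     (\<forall>x\<in>cube. \<forall>x'\<in>cube. \<bar>h x - h x'\<bar> \<le> L * linf_dist x x')}"

text \<open>Envelopes at round t using past data (xs s, ys s) for 1 \<le> s < t.
  Empty max is -\<infinity> and empty min is +\<infinity>, so with no past data they are 0 and 1.\<close>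
definition lower_env :: "real \<Rightarrow> (nat \<Rightarrow> real ^ 'd) \<Rightarrow> (nat \<Rightarrow> real) \<Rightarrow> nat \<Rightarrow> real ^ 'd \<Rightarrow> real" where
  "lower_env L xs ys t x =
     (if t \<le> 1 then 0
      else max 0 (Max ((\<lambda>s. ys s - L * linf_dist x (xs s)) ` {1..<t})))"

definition upper_env :: "real \<Rightarrow> (nat \<Rightarrow> real ^ 'd) \<Rightarrow> (nat \<Rightarrow> real) \<Rightarrow> nat \<Rightarrow> real ^ 'd \<Rightarrow> real" where
  "upper_env L xs ys t x =
     (if t \<le> 1 then 1
      else min 1 (Min ((\<lambda>s. ys s + L * linf_dist x (xs s)) ` {1..<t})))"

definition envelope_pred :: "real \<Rightarrow> (nat \<Rightarrow> real ^ 'd) \<Rightarrow> (nat \<Rightarrow> real) \<Rightarrow> nat \<Rightarrow> real" where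
  "envelope_pred L xs ys t =
     (lower_env L xs ys t (xs t) + upper_env L xs ys t (xs t)) / 2"

end

theory Submission
  imports Defs
begin

lemma harm_le_ln: "n \<ge> 1 \<Longrightarrow> (harm n :: real) \<le> 1 + ln (real n)"
proof (induction n rule: dec_induct)
  case base
  then show ?case by (simp add: harm_def)
next
  case (step n)
  have "ln (real n / real (Suc n)) \<le> real n / real (Suc n) - 1"
    using step by (intro ln_le_minus_one) auto
  also have "\<dots> = - inverse (real (Suc n))" by (simp add: field_simps)
  finally have "inverse (real (Suc n)) \<le> ln (real (Suc n)) - ln (real n)"
    using step by (simp add: ln_div)
  then show ?case using step by (simp add: harm_Suc)
qed

lemma sum_pow_le_harm:
  fixes e :: "nat \<Rightarrow> real"
  assumes "d \<ge> 1"
  shows "finite S \<Longrightarrow> (\<forall>t\<in>S. e t \<ge> 0) \<Longrightarrow>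
    (\<forall>\<delta>>0. real (card {t\<in>S. \<delta> \<le> e t}) * \<delta> ^ d \<le> C) \<Longrightarrow>
    (\<Sum>t\<in>S. e t ^ d) \<le> C * harm (card S)"
proof (induction "card S" arbitrary: S)
  case 0
  then show ?case by (simp add: harm_def)
next
  case (Suc k S)
  have C0: "C \<ge> 0" using Suc.prems(3)[rule_format, of 1] by simp
  have ne: "S \<noteq> {}" using Suc.hyps(2) by auto
  define m where "m = Min (e ` S)"
  have "m \<in> e ` S" unfolding m_def using Suc.prems(1) ne by simp
  then obtain t0 where t0: "t0 \<in> S" "e t0 = m" by auto
  have mle: "\<forall>t\<in>S. m \<le> e t" unfolding m_def using Suc.prems(1) by simp
  have cS': "card (S - {t0}) = k" using Suc.hyps(2) t0 Suc.prems(1) by simp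
  have hyp': "\<forall>\<delta>>0. real (card {t\<in>S - {t0}. \<delta> \<le> e t}) * \<delta> ^ d \<le> C"
  proof (intro allI impI)
    fix \<delta> :: real assume "\<delta> > 0"
    have "card {t\<in>S - {t0}. \<delta> \<le> e t} \<le> card {t\<in>S. \<delta> \<le> e t}"
      by (rule card_mono) (use Suc.prems(1) in auto)
    hence "real (card {t\<in>S - {t0}. \<delta> \<le> e t}) * \<delta> ^ d \<le> real (card {t\<in>S. \<delta> \<le> e t}) * \<delta> ^ d"
      using \<open>\<delta> > 0\<close> by (intro mult_right_mono) auto
    also have "\<dots> \<le> C" using Suc.prems(3) \<open>\<delta> > 0\<close> by auto
    finally show "real (card {t\<in>S - {t0}. \<delta> \<le> e t}) * \<delta> ^ d \<le> C" .
  qed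
  have IH: "(\<Sum>t\<in>S - {t0}. e t ^ d) \<le> C * harm k"
    using Suc.hyps(1)[OF cS'[symmetric]] Suc.prems(1,2) hyp' cS' by auto
  have mb: "e t0 ^ d \<le> C * inverse (real (Suc k))"
  proof (cases "m > 0")
    case True
    have "{t\<in>S. m \<le> e t} = S" using mle by auto
    hence "real (Suc k) * m ^ d \<le> C" using Suc.prems(3) True Suc.hyps(2) by metis
    then show ?thesis using t0 by (simp add: field_simps)
  next
    case False
    then have "m = 0" using t0 Suc.prems(2) by force
    then show ?thesis using t0 C0 assms by (simp add: power_0_left)
  qed
  have "(\<Sum>t\<in>S. e t ^ d) = e t0 ^ d + (\<Sum>t\<in>S - {t0}. e t ^ d)"
    using Suc.prems(1) t0 by (simp add: sum.remove)
  also have "\<dots> \<le> C * inverse (real (Suc k)) + C * harm k" using mb IH by linarith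
  also have "\<dots> = C * harm (card S)" using Suc.hyps(2)[symmetric] by (simp add: harm_Suc algebra_simps)
  finally show ?case .
qed


lemma linf_dist_sym: "linf_dist x y = linf_dist y x"
  unfolding linf_dist_def by (simp add: abs_minus_commute)

lemma linf_dist_ge: "\<bar>x $ i - y $ i\<bar> \<le> linf_dist x y"
  unfolding linf_dist_def by (rule Max_ge) auto

lemma sep_card:
  fixes p :: "nat \<Rightarrow> real ^ 'd"
  assumes cube: "\<And>t. p t \<in> cube" and fin: "finite P" and ep: "\<epsilon> > 0"
    and sep: "\<And>t t'. t \<in> P \<Longrightarrow> t' \<in> P \<Longrightarrow> t \<noteq> t' \<Longrightarrow> \<epsilon> \<le> linf_dist (p t) (p t')"
  shows "real (card P) \<le> (2 / \<epsilon> + 2) ^ CARD('d)"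
proof -
  define M :: nat where "M = nat \<lfloor>2 / \<epsilon>\<rfloor> + 1"
  have fl0: "\<lfloor>2 / \<epsilon>\<rfloor> \<ge> 0" using ep by simp
  have rM: "real M = real_of_int \<lfloor>2 / \<epsilon>\<rfloor> + 1" unfolding M_def using fl0 by simp
  have M1: "real M > 2 / \<epsilon>" using rM floor_correct[of "2/\<epsilon>"] by linarith
  have M2: "real M \<le> 2 / \<epsilon> + 1" using rM floor_correct[of "2/\<epsilon>"] by linarith
  have Mpos: "real M > 0" using M1 ep by (smt (verit) divide_pos_pos)
  have Mle: "2 / real M < \<epsilon>" using M1 ep Mpos by (simp add: field_simps)
  define g where "g t = (\<lambda>i::'d. \<lfloor>(p t $ i + 1) * real M / 2\<rfloor>)" for t
  have img: "g ` P \<subseteq> PiE UNIV (\<lambda>_. {0..int M})"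
  proof
    fix z assume "z \<in> g ` P"
    then obtain t where z: "z = g t" by auto
    have "\<forall>i. 0 \<le> z i \<and> z i \<le> int M"
    proof
      fix i
      have b: "-1 \<le> p t $ i" "p t $ i \<le> 1" using cube[of t] unfolding cube_def by auto
      have "0 \<le> (p t $ i + 1) * real M / 2" using b Mpos by auto
      moreover have "(p t $ i + 1) * real M \<le> 2 * real M" using b Mpos
        by (intro mult_right_mono) auto
      hence "(p t $ i + 1) * real M / 2 \<le> real M" by simp
      ultimately show "0 \<le> z i \<and> z i \<le> int M" unfolding z g_def
        by (simp add: floor_le_iff)
    qed
    then show "z \<in> PiE UNIV (\<lambda>_. {0..int M})" by auto
  qed
  have inj: "inj_on g P"
  proof (rule inj_onI, rule ccontr)
    fix t t' assume tP: "t \<in> P" "t' \<in> P" and eq: "g t = g t'" and ne: "t \<noteq> t'"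
    have "\<forall>i. \<bar>p t $ i - p t' $ i\<bar> < \<epsilon>"
    proof
      fix i
      define a where "a = (p t $ i + 1) * real M / 2"
      define b where "b = (p t' $ i + 1) * real M / 2"
      have "\<lfloor>a\<rfloor> = \<lfloor>b\<rfloor>"
        using eq unfolding g_def a_def b_def by metis
      hence ab: "\<bar>a - b\<bar> < 1"
        using floor_correct[of a] floor_correct[of b] by linarith
      have "a - b = (p t $ i - p t' $ i) * (real M / 2)" unfolding a_def b_def
        by (simp add: field_simps)
      hence "\<bar>a - b\<bar> = \<bar>p t $ i - p t' $ i\<bar> * \<bar>real M / 2\<bar>"
        by (simp only: abs_mult)
      hence "\<bar>a - b\<bar> = \<bar>p t $ i - p t' $ i\<bar> * (real M / 2)" using Mpos by simp
      hence "\<bar>p t $ i - p t' $ i\<bar> * (real M / 2) < 1" using ab by simp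
      hence "\<bar>p t $ i - p t' $ i\<bar> < 2 / real M" using Mpos by (simp add: field_simps)
      then show "\<bar>p t $ i - p t' $ i\<bar> < \<epsilon>" using Mle by linarith
    qed
    hence "linf_dist (p t) (p t') < \<epsilon>" unfolding linf_dist_def by simp
    then show False using sep[OF tP ne] by linarith
  qed
  have "card P = card (g ` P)" using inj by (simp add: card_image)
  also have "\<dots> \<le> card (PiE (UNIV::'d set) (\<lambda>_. {0..int M}))"
    by (rule card_mono[OF _ img]) (simp add: finite_PiE)
  also have "\<dots> = (M + 1) ^ CARD('d)" by (simp add: card_PiE nat_add_distrib)
  finally have "real (card P) \<le> (real M + 1) ^ CARD('d)"
    by (metis of_nat_1 of_nat_add of_nat_le_iff of_nat_power)
  also have "\<dots> \<le> (2 / \<epsilon> + 2) ^ CARD('d)" using M2 Mpos by (intro power_mono) auto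
  finally show ?thesis .
qed


lemma env_bounds:
  fixes L :: real and xs :: "nat \<Rightarrow> real ^ 'd" and f :: "real ^ 'd \<Rightarrow> real"
  assumes L: "L \<ge> 0" and cube: "\<And>t. xs t \<in> cube" and lip: "f \<in> lip_class L"
  defines "y \<equiv> (\<lambda>s. f (xs s))"
  shows "0 \<le> lower_env L xs y t (xs t) \<and> lower_env L xs y t (xs t) \<le> y t \<and>
         y t \<le> upper_env L xs y t (xs t) \<and> upper_env L xs y t (xs t) \<le> 1"
    and "1 \<le> s \<Longrightarrow> s < t \<Longrightarrow>
         upper_env L xs y t (xs t) - lower_env L xs y t (xs t) \<le> 2 * L * linf_dist (xs t) (xs s)"
proof -
  have y01: "0 \<le> y t \<and> y t \<le> 1" for t using lip cube unfolding lip_class_def y_def by auto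
  have lp: "\<bar>y t - y s\<bar> \<le> L * linf_dist (xs t) (xs s)" for t s
    using lip cube unfolding lip_class_def y_def by auto
  show "0 \<le> lower_env L xs y t (xs t) \<and> lower_env L xs y t (xs t) \<le> y t \<and>
         y t \<le> upper_env L xs y t (xs t) \<and> upper_env L xs y t (xs t) \<le> 1"
  proof (cases "t \<le> 1")
    case True
    then show ?thesis using y01[of t] unfolding lower_env_def upper_env_def by simp
  next
    case False
    have ne: "{1..<t} \<noteq> {}" using False by auto
    have a: "Max ((\<lambda>s. y s - L * linf_dist (xs t) (xs s)) ` {1..<t}) \<le> y t"
    proof (subst Max_le_iff)
      show "\<forall>a\<in>(\<lambda>s. y s - L * linf_dist (xs t) (xs s)) ` {1..<t}. a \<le> y t"
      proof
        fix a assume "a \<in> (\<lambda>s. y s - L * linf_dist (xs t) (xs s)) ` {1..<t}"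
        then obtain s where "a = y s - L * linf_dist (xs t) (xs s)" by auto
        then show "a \<le> y t" using lp[of t s] by (simp add: abs_le_iff)
      qed
    qed (use ne in auto)
    have b: "y t \<le> Min ((\<lambda>s. y s + L * linf_dist (xs t) (xs s)) ` {1..<t})"
    proof (subst Min_ge_iff)
      show "\<forall>a\<in>(\<lambda>s. y s + L * linf_dist (xs t) (xs s)) ` {1..<t}. y t \<le> a"
      proof
        fix a assume "a \<in> (\<lambda>s. y s + L * linf_dist (xs t) (xs s)) ` {1..<t}"
        then obtain s where "a = y s + L * linf_dist (xs t) (xs s)" by auto
        then show "y t \<le> a" using lp[of t s] by (simp add: abs_le_iff)
      qed
    qed (use ne in auto)
    show ?thesis using False a b y01[of t] unfolding lower_env_def upper_env_def by simp
  qed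
next
  assume s: "1 \<le> s" "s < t"
  then have nt: "\<not> t \<le> 1" by simp
  have a: "y s - L * linf_dist (xs t) (xs s) \<le> Max ((\<lambda>s. y s - L * linf_dist (xs t) (xs s)) ` {1..<t})"
    using s by (intro Max_ge) auto
  have b: "Min ((\<lambda>s. y s + L * linf_dist (xs t) (xs s)) ` {1..<t}) \<le> y s + L * linf_dist (xs t) (xs s)"
    using s by (intro Min_le) auto
  show "upper_env L xs y t (xs t) - lower_env L xs y t (xs t) \<le> 2 * L * linf_dist (xs t) (xs s)"
    using a b nt unfolding lower_env_def upper_env_def by simp
qed


lemma mid_aux:
  fixes a b y :: real
  assumes "0 \<le> a \<and> a \<le> y \<and> y \<le> b \<and> b \<le> 1"
  shows "\<bar>y - (a + b) / 2\<bar> \<le> 1/2" and "\<bar>y - (a + b) / 2\<bar> \<le> (b - a) / 2"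
proof -
  have h: "0 \<le> a" "a \<le> y" "y \<le> b" "b \<le> 1" using assms by auto
  have "\<bar>2 * y - (a + b)\<bar> \<le> 1" "\<bar>2 * y - (a + b)\<bar> \<le> b - a" using h by (simp_all add: abs_le_iff)
  moreover have "\<bar>y - (a + b) / 2\<bar> = \<bar>2 * y - (a + b)\<bar> / 2" by (simp add: field_simps)
  ultimately show "\<bar>y - (a + b) / 2\<bar> \<le> 1/2" and "\<bar>y - (a + b) / 2\<bar> \<le> (b - a) / 2" by simp_all
qed

theorem corollaryA5:
  fixes L :: real and xs :: "nat \<Rightarrow> real ^ 'd" and f :: "real ^ 'd \<Rightarrow> real" and T :: nat
  assumes "L \<ge> 1"
    and "\<And>t. xs t \<in> cube"
    and "f \<in> lip_class L"
    and "T \<ge> 2"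
  shows "(\<Sum>t = 1..T. \<bar>f (xs t) - envelope_pred L xs (\<lambda>s. f (xs s)) t\<bar> ^ CARD('d))
           \<le> 8 ^ CARD('d) * L ^ CARD('d) * (1 + ln (real T))"
proof -
  define y where "y = (\<lambda>s. f (xs s))"
  define e where "e t = \<bar>f (xs t) - envelope_pred L xs y t\<bar>" for t
  define d where "d = CARD('d)"
  have d1: "d \<ge> 1" unfolding d_def by (simp add: Suc_le_eq)
  have L0: "L \<ge> 0" using assms(1) by simp
  note B1 = env_bounds(1)[where L=L and xs=xs and f=f, OF L0 assms(2,3), folded y_def]
  note B2 = env_bounds(2)[where L=L and xs=xs and f=f, OF L0 assms(2,3), folded y_def]
  have e0: "e t \<ge> 0" for t unfolding e_def by simp
  have eeq: "e t = \<bar>y t - (lower_env L xs y t (xs t) + upper_env L xs y t (xs t)) / 2\<bar>" for t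
    unfolding e_def envelope_pred_def y_def by simp
  have ehalf: "e t \<le> 1/2" for t
    using eeq[of t] mid_aux(1)[OF B1[where t=t]] by (simp add: y_def)
  have edist: "e t \<le> L * linf_dist (xs t) (xs s)" if "1 \<le> s" "s < t" for s t
  proof -
    have "(upper_env L xs y t (xs t) - lower_env L xs y t (xs t)) / 2 \<le> L * linf_dist (xs t) (xs s)"
      using B2[OF that] by simp
    moreover have "y t = f (xs t)" by (simp add: y_def)
    ultimately show ?thesis using eeq[of t] mid_aux(2)[OF B1[where t=t]] by simp
  qed
  have cnt: "\<forall>\<delta>>0. real (card {t\<in>{1..T}. \<delta> \<le> e t}) * \<delta> ^ d \<le> (3 * L) ^ d"
  proof (intro allI impI)
    fix \<delta> :: real assume dp: "\<delta> > 0"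
    define P where "P = {t\<in>{1..T}. \<delta> \<le> e t}"
    show "real (card {t\<in>{1..T}. \<delta> \<le> e t}) * \<delta> ^ d \<le> (3 * L) ^ d"
    proof (cases "\<delta> \<le> 1/2")
      case False
      have "\<not> \<delta> \<le> e t" for t using ehalf[of t] False by linarith
      then have "{t\<in>{1..T}. \<delta> \<le> e t} = {}" by blast
      moreover have "(0::real) \<le> (3 * L) ^ d" using L0 by simp
      ultimately show ?thesis by (simp only: card.empty)
    next
      case True
      define \<epsilon> where "\<epsilon> = \<delta> / L"
      have ep: "\<epsilon> > 0" unfolding \<epsilon>_def using dp assms(1) by simp
      have sep1: "\<epsilon> \<le> linf_dist (xs t) (xs t')" if "t \<in> P" "t' \<in> P" "t' < t" for t t'
      proof -
        have "\<delta> \<le> L * linf_dist (xs t) (xs t')"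
          using that edist[of t' t] unfolding P_def by auto
        then show ?thesis unfolding \<epsilon>_def using assms(1) by (simp add: field_simps)
      qed
      have sep: "\<epsilon> \<le> linf_dist (xs t) (xs t')" if "t \<in> P" "t' \<in> P" "t \<noteq> t'" for t t'
      proof (cases "t' < t")
        case True then show ?thesis using sep1 that by blast
      next
        case False then have "t < t'" using that by simp
        then have "\<epsilon> \<le> linf_dist (xs t') (xs t)" using sep1[of t' t] that by simp
        then show ?thesis by (subst linf_dist_sym)
      qed
      have "real (card P) \<le> (2 / \<epsilon> + 2) ^ CARD('d)"
        by (rule sep_card[OF assms(2) _ ep sep]) (auto simp: P_def)
      hence "real (card P) * \<delta> ^ d \<le> (2 / \<epsilon> + 2) ^ d * \<delta> ^ d"
        unfolding d_def using dp by (intro mult_right_mono) auto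
      also have "\<dots> = ((2 / \<epsilon> + 2) * \<delta>) ^ d" by (simp add: power_mult_distrib)
      also have "(2 / \<epsilon> + 2) * \<delta> = 2 * L + 2 * \<delta>"
        unfolding \<epsilon>_def using dp assms(1) by (simp add: field_simps)
      also have "(2 * L + 2 * \<delta>) ^ d \<le> (3 * L) ^ d"
        using True assms(1) dp by (intro power_mono) auto
      finally show ?thesis unfolding P_def .
    qed
  qed
  have "(\<Sum>t\<in>{1..T}. e t ^ d) \<le> (3 * L) ^ d * harm (card {1..T})"
    by (rule sum_pow_le_harm[OF d1 _ _ cnt]) (use e0 in auto)
  also have "\<dots> \<le> (3 * L) ^ d * (1 + ln (real T))"
    using harm_le_ln[of T] assms(4) L0 by (intro mult_left_mono) auto
  also have "\<dots> \<le> (8 * L) ^ d * (1 + ln (real T))"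
  proof (rule mult_right_mono)
    show "(3 * L) ^ d \<le> (8 * L) ^ d" using L0 by (intro power_mono) auto
    have "ln (real T) \<ge> 0" using assms(4) by simp
    then show "0 \<le> 1 + ln (real T)" by linarith
  qed
  finally show ?thesis unfolding e_def y_def d_def by (simp add: power_mult_distrib)
qed

end
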